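(* Let $-1<r<1$ and $\nu=3$ (sample size $n=4$). The posterior density of the scale-invariant slope under the Cauchy prior, $$p(\tilde\beta\mid y)=\frac{p_C(\tilde\beta)J(\tilde\beta,3,r,1)}{\int_{-\infty}^\infty p_C(x)J(x,3,r,1)\,dx},\qquad p_C(x)=\frac1\pi\frac1{1+x^2},$$ equals $$p(\tilde\beta\mid y)=K(r)\,\frac{1}{1+\tilde\beta^2}\cdot\frac{|\tilde\beta|}{\tilde\beta^2-2r\tilde\beta+1},\qquad K(r)={}_2F_1(1,1;\tfrac32;r^2)^{-1}=\frac{r\sqrt{1-r^2}}{\arcsin r}\ (r\ne0),\quad K(0)=1.$$
   Context: Functions: $p_t(t;\nu)$ Student $t$ density; $P_F(x;\nu_1,\nu_2)$ $F$ distribution function; for $\nu>1$, $-1<r<1$, $\tilde\beta>0$: $t_-(\nu,r)=-\sqrt{\nu}\,r/\sqrt{1-r^2}$, $t_+(\tilde\beta,\nu,r)=\sqrt{\nu}(\tilde\beta-r)/\sqrt{1-r^2}$, $F(t,\tilde\beta,\nu,r)=\frac{\nu-1}{\nu+1}\frac{\nu+t^2}{[t_+-t_-]^2-[t-t_-]^2}$, $I(\tilde\beta,\nu,r)=\int_{t_-}^{t_+}p_t(t;\nu)P_F(F(t,\tilde\beta,\nu,r);\nu+1,\nu-1)\,dt$, and for $\beta\ne0$, $l>0$: $J(\beta,\nu,r,l)=I(|\beta|/l,\nu,r\,\mathrm{sign}\beta)+I(l/|\beta|,\nu,r\,\mathrm{sign}\beta)$. ${}_2F_1$ is the Gauss hypergeometric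 function. The posterior of $\beta$ is $p(\tilde\beta\mid y)/l$ with $\tilde\beta=\beta/l$. *)

theory Defs
  imports "HOL-Analysis.Analysis"
begin

definition student_t_density :: "real \<Rightarrow> real \<Rightarrow> real" where
  "student_t_density \<nu> t =
     Gamma ((\<nu> + 1) / 2) / (sqrt (\<nu> * pi) * Gamma (\<nu> / 2))
     * (1 + t\<^sup>2 / \<nu>) powr (- (\<nu> + 1) / 2)"

definition F_density :: "real \<Rightarrow> real \<Rightarrow> real \<Rightarrow> real" where
  "F_density d1 d2 s =
     Gamma ((d1 + d2) / 2) / (Gamma (d1 / 2) * Gamma (d2 / 2))
     * (d1 / d2) powr (d1 / 2) * s powr (d1 / 2 - 1)
     * (1 + d1 * s / d2) powr (- (d1 + d2) / 2)"

definition F_cdf :: "real \<Rightarrow> real \<Rightarrow> real \<Rightarrow> real" where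
  "F_cdf d1 d2 x = (if x \<le> 0 then 0 else (LBINT s:{0..x}. F_density d1 d2 s))"

definition t_minus :: "real \<Rightarrow> real \<Rightarrow> real" where
  "t_minus \<nu> r = - sqrt \<nu> * r / sqrt (1 - r\<^sup>2)"

definition t_plus :: "real \<Rightarrow> real \<Rightarrow> real \<Rightarrow> real" where
  "t_plus b \<nu> r = sqrt \<nu> * (b - r) / sqrt (1 - r\<^sup>2)"

definition Fstat :: "real \<Rightarrow> real \<Rightarrow> real \<Rightarrow> real \<Rightarrow> real" where
  "Fstat t b \<nu> r = (\<nu> - 1) / (\<nu> + 1) * (\<nu> + t\<^sup>2)
     / ((t_plus b \<nu> r - t_minus \<nu> r)\<^sup>2 - (t - t_minus \<nu> r)\<^sup>2)"

definition Ifun :: "real \<Rightarrow> real \<Rightarrow> real \<Rightarrow> real" where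
  "Ifun b \<nu> r = (LBINT t:{t_minus \<nu> r .. t_plus b \<nu> r}.
      student_t_density \<nu> t * F_cdf (\<nu> + 1) (\<nu> - 1) (Fstat t b \<nu> r))"

definition Jfun :: "real \<Rightarrow> real \<Rightarrow> real \<Rightarrow> real \<Rightarrow> real" where
  "Jfun \<beta> \<nu> r l = Ifun (\<bar>\<beta>\<bar> / l) \<nu> (r * sgn \<beta>) + Ifun (l / \<bar>\<beta>\<bar>) \<nu> (r * sgn \<beta>)"

definition cauchy_density :: "real \<Rightarrow> real" where
  "cauchy_density x = 1 / pi * (1 / (1 + x\<^sup>2))"

definition posterior_cauchy :: "real \<Rightarrow> real \<Rightarrow> real \<Rightarrow> real" where
  "posterior_cauchy \<nu> r b =
     cauchy_density b * Jfun b \<nu> r 1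
     / (LINT x|lborel. cauchy_density x * Jfun x \<nu> r 1)"

definition hyp2F1 :: "real \<Rightarrow> real \<Rightarrow> real \<Rightarrow> real \<Rightarrow> real" where
  "hyp2F1 a b c z = (\<Sum>n. pochhammer a n * pochhammer b n / (pochhammer c n * fact n) * z ^ n)"

definition Kconst :: "real \<Rightarrow> real" where
  "Kconst r = (if r = 0 then 1 else r * sqrt (1 - r\<^sup>2) / arcsin r)"

end

theory Submission
  imports Defs "HOL-Real_Asymp.Real_Asymp"
begin

lemma F_density_42: "s \<ge> 0 \<Longrightarrow> F_density 4 2 s = 8 * s / (1 + 2 * s) ^ 3"
proof -
  assume s: "s \<ge> 0"
  have g3: "Gamma (3::real) = 2" by (simp add: Gamma_numeral)
  have g2: "Gamma (2::real) = 1" by (simp add: Gamma_numeral)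
  have p: "(1 + 2 * s) powr (-3) = 1 / (1 + 2 * s) ^ 3"
    using s by (simp add: powr_minus divide_inverse)
  show ?thesis unfolding F_density_def using s g3 g2 p
    by (simp add: powr_one)
qed

lemma F_cdf_42: "x > 0 \<Longrightarrow> F_cdf 4 2 x = (2 * x / (1 + 2 * x)) ^ 2"
proof -
  assume x: "x > 0"
  have "F_cdf 4 2 x = (LBINT s:{0..x}. 8 * s / (1 + 2 * s) ^ 3)"
    unfolding F_cdf_def using x
    by (auto intro!: set_lebesgue_integral_cong simp: F_density_42)
  also have "\<dots> = (2 * x / (1 + 2 * x)) ^ 2 - (2 * 0 / (1 + 2 * 0)) ^ 2"
    unfolding set_lebesgue_integral_def
  proof (rule integral_FTC_atLeastAtMost)
    show "0 \<le> x" using x by simp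
    fix y assume y: "0 \<le> y" "y \<le> x"
    have nz: "1 + 2 * y \<noteq> 0" using y by simp
    have "((\<lambda>y. (2 * y / (1 + 2 * y)) ^ 2) has_real_derivative 
           (of_nat 2 * (2 * y / (1 + 2 * y)) ^ (2 - 1) * ((2 * (1 + 2 * y) - 2 * y * 2) / (1 + 2 * y)^2))) (at y)"
      using nz by (intro derivative_eq_intros DERIV_divide DERIV_power) (auto simp: power2_eq_square)
    also have "(of_nat 2 * (2 * y / (1 + 2 * y)) ^ (2 - 1) * ((2 * (1 + 2 * y) - 2 * y * 2) / (1 + 2 * y)^2)) = 8 * y / (1 + 2 * y) ^ 3"
      using nz by (simp add: field_simps power2_eq_square power3_eq_cube)
    finally show "((\<lambda>y. (2 * y / (1 + 2 * y)) ^ 2) has_vector_derivative 8 * y / (1 + 2 * y) ^ 3) (at y within {0..x})"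
      by (simp add: has_real_derivative_iff_has_vector_derivative has_vector_derivative_at_within)
  next
    show "continuous_on {0..x} (\<lambda>y. 8 * y / (1 + 2 * y) ^ 3)"
      by (intro continuous_intros) auto
  qed
  finally show ?thesis by simp
qed

lemma student3: "student_t_density 3 t = 18 / (pi * sqrt 3 * (3 + t\<^sup>2)\<^sup>2)"
proof -
  have h: "(1/2::real) \<notin> \<int>\<^sub>\<le>\<^sub>0" by (auto elim!: nonpos_Ints_cases)
  have g: "Gamma (3/2::real) = sqrt pi / 2"
    using Gamma_plus1[OF h] by (simp add: Gamma_one_half_real)
  have g2: "Gamma (2::real) = 1" by (simp add: Gamma_numeral)
  have p: "(1 + t\<^sup>2 / 3) powr (- (3 + 1) / 2) = 9 / (3 + t\<^sup>2)\<^sup>2"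
  proof -
    have "(1 + t\<^sup>2 / 3) powr (- (3 + 1) / 2) = inverse ((1 + t\<^sup>2 / 3) ^ 2)"
      by (simp add: powr_minus)
    also have "\<dots> = 9 / (3 + t\<^sup>2)\<^sup>2" by (simp add: field_simps power2_eq_square)
    finally show ?thesis .
  qed
  have sq: "sqrt (3 * pi) = sqrt 3 * sqrt pi" by (simp add: real_sqrt_mult)
  have pp: "\<And>x. sqrt pi * (sqrt pi * x) = pi * x" by (simp add: mult.assoc[symmetric])
  show ?thesis unfolding student_t_density_def p g sq
    by (simp add: field_simps g2 pp)
qed

lemma deriv_aux:
  fixes A B m y :: real
  assumes nz: "A - B * y \<noteq> 0"
  shows "((\<lambda>t. (t - m) / (A - B * t)) has_real_derivative (A - B * m) / (A - B * y)\<^sup>2) (at y)"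
proof -
  have d1: "((\<lambda>t. t - m) has_real_derivative 1) (at y)"
    by (auto intro!: derivative_eq_intros)
  have d2: "((\<lambda>t. A - B * t) has_real_derivative - B) (at y)"
    by (auto intro!: derivative_eq_intros)
  have "((\<lambda>t. (t - m) / (A - B * t)) has_real_derivative ((1 * (A - B * y) - (y - m) * (- B)) / ((A - B * y) * (A - B * y)))) (at y)"
    by (rule DERIV_divide[OF d1 d2 nz])
  moreover have "(1 * (A - B * y) - (y - m) * (- B)) / ((A - B * y) * (A - B * y)) = (A - B * m) / (A - B * y)\<^sup>2"
    by (simp add: power2_eq_square algebra_simps)
  ultimately show ?thesis by simp
qed

lemma Ifun3:
  assumes b: "b > 0" and r1: "-1 < r" and r2: "r < 1"
  shows "Ifun b 3 r = 2 / pi * b * (1 - r\<^sup>2) * sqrt (1 - r\<^sup>2) / ((1 + b\<^sup>2) * (b\<^sup>2 - 2 * r * b + 1))"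
proof -
  define s where "s = sqrt (1 - r\<^sup>2)"
  define q where "q = sqrt (3::real)"
  have r2': "r\<^sup>2 < 1" using r1 r2 by (simp add: abs_square_less_1)
  have s0: "s > 0" unfolding s_def using r2' by simp
  have ss: "s\<^sup>2 = 1 - r\<^sup>2" unfolding s_def using r2' by simp
  have q0: "q > 0" and qq: "q\<^sup>2 = 3" unfolding q_def by auto
  define tm where "tm = - q * r / s"
  define tp where "tp = q * (b - r) / s"
  have tm_eq: "t_minus 3 r = tm" unfolding t_minus_def tm_def q_def s_def by simp
  have tp_eq: "t_plus b 3 r = tp" unfolding t_plus_def tp_def q_def s_def by simp
  have D: "tp - tm = q * b / s" unfolding tp_def tm_def using s0 by (simp add: field_simps)
  have Dpos: "tp - tm > 0" unfolding D using q0 s0 b by simp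
  define A where "A = 3 * (b\<^sup>2 + 1 - 2 * r\<^sup>2) / s\<^sup>2"
  define B where "B = 2 * q * r / s"
  have key: "\<And>t. (tp - tm)\<^sup>2 - (t - tm)\<^sup>2 + 3 + t\<^sup>2 = A - B * t"
  proof -
    fix t
    have "s \<noteq> 0" using s0 by simp
    then show "(tp - tm)\<^sup>2 - (t - tm)\<^sup>2 + 3 + t\<^sup>2 = A - B * t"
      unfolding tp_def tm_def A_def B_def using qq ss
      by (simp add: field_simps power2_eq_square; algebra)
  qed
  have A_tm: "A - B * tm = 3 * (b\<^sup>2 + 1) / s\<^sup>2"
  proof -
    have "s \<noteq> 0" using s0 by simp
    then show ?thesis unfolding tm_def A_def B_def using qq ss
      by (simp add: field_simps power2_eq_square; algebra)
  qed
  have A_tp: "A - B * tp = 3 * (b\<^sup>2 - 2 * r * b + 1) / s\<^sup>2"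
  proof -
    have "s \<noteq> 0" using s0 by simp
    then show ?thesis unfolding tp_def A_def B_def using qq ss
      by (simp add: field_simps power2_eq_square; algebra)
  qed
  have den_nonneg: "\<And>t. tm \<le> t \<Longrightarrow> t \<le> tp \<Longrightarrow> (tp - tm)\<^sup>2 - (t - tm)\<^sup>2 \<ge> 0"
    by (simp add: power_mono)
  have den_pos: "\<And>t. tm \<le> t \<Longrightarrow> t < tp \<Longrightarrow> (tp - tm)\<^sup>2 - (t - tm)\<^sup>2 > 0"
    by (simp add: power_strict_mono)
  have pos: "\<And>t. tm \<le> t \<Longrightarrow> t \<le> tp \<Longrightarrow> A - B * t > 0"
  proof -
    fix t assume "tm \<le> t" "t \<le> tp"
    from den_nonneg[OF this] have "A - B * t \<ge> 3 + t\<^sup>2" using key[of t] by linarith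
    moreover have "3 + t\<^sup>2 > 0" by (simp add: add_pos_nonneg)
    ultimately show "A - B * t > 0" by linarith
  qed
  define c where "c = 18 / (pi * q)"
  have integrand: "student_t_density 3 t * F_cdf (3 + 1) (3 - 1) (Fstat t b 3 r) = c / (A - B * t)\<^sup>2"
    if t: "tm \<le> t" "t < tp" for t
  proof -
    define den where "den = (tp - tm)\<^sup>2 - (t - tm)\<^sup>2"
    have dpos: "den > 0" unfolding den_def using den_pos[OF t] .
    have F: "Fstat t b 3 r = (3 + t\<^sup>2) / (2 * den)"
      unfolding Fstat_def tm_eq tp_eq den_def by (simp add: field_simps)
    have t3: "3 + t\<^sup>2 > 0" by (simp add: add_pos_nonneg)
    have Fpos: "Fstat t b 3 r > 0" unfolding F using dpos t3 by simp
    have ABt: "den + 3 + t\<^sup>2 = A - B * t" unfolding den_def using key[of t] by simp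
    have "F_cdf (3 + 1) (3 - 1) (Fstat t b 3 r) = (2 * Fstat t b 3 r / (1 + 2 * Fstat t b 3 r))\<^sup>2"
      using F_cdf_42[OF Fpos] by simp
    also have "2 * Fstat t b 3 r / (1 + 2 * Fstat t b 3 r) = (3 + t\<^sup>2) / (den + 3 + t\<^sup>2)"
    proof -
      have e1: "2 * ((3 + t\<^sup>2) / (2 * den)) = (3 + t\<^sup>2) / den" by (simp only: mult_divide_mult_cancel_left_if)
      have e2: "1 + (3 + t\<^sup>2) / den = (den + 3 + t\<^sup>2) / den" using dpos by (simp add: field_simps)
      have e3: "den + 3 + t\<^sup>2 > 0" using dpos t3 by simp
      show ?thesis unfolding F e1 e2 using dpos e3 by simp
    qed
    finally have "F_cdf (3 + 1) (3 - 1) (Fstat t b 3 r) = ((3 + t\<^sup>2) / (A - B * t))\<^sup>2"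
      unfolding ABt .
    moreover have "A - B * t > 0" using pos[of t] t by simp
    moreover have gen: "\<And>X Y p::real. X \<noteq> 0 \<Longrightarrow> Y \<noteq> 0 \<Longrightarrow> 18 / (p * X\<^sup>2) * (X / Y)\<^sup>2 = 18 / p / Y\<^sup>2"
      by (simp add: field_simps power2_eq_square)
    ultimately show ?thesis unfolding student3 c_def q_def using t3 gen[of "3 + t\<^sup>2" "A - B * t" "pi * sqrt 3"]
      by (simp add: mult.assoc)
  qed
  have endpoint: "F_cdf (3 + 1) (3 - 1) (Fstat tp b 3 r) = 0"
    unfolding Fstat_def tm_eq tp_eq F_cdf_def by simp
  have eq: "indicator {tm..tp} t *\<^sub>R (student_t_density 3 t * F_cdf (3 + 1) (3 - 1) (Fstat t b 3 r))
      = indicator {tm..tp} t *\<^sub>R (c / (A - B * t)\<^sup>2) - indicator {tp} t *\<^sub>R (c / (A - B * tp)\<^sup>2)" for t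
  proof (cases "t = tp")
    case True then show ?thesis using endpoint Dpos by (simp add: indicator_def)
  next
    case False then show ?thesis using integrand[of t] by (auto simp: indicator_def)
  qed
  have cont: "continuous_on {tm..tp} (\<lambda>t. c / (A - B * t)\<^sup>2)"
  proof (intro continuous_intros ballI)
    fix t assume "t \<in> {tm..tp}"
    then have "A - B * t > 0" using pos by auto
    then show "(A - B * t)\<^sup>2 \<noteq> 0" by simp
  qed
  have int1: "integrable lborel (\<lambda>t. indicator {tm..tp} t *\<^sub>R (c / (A - B * t)\<^sup>2))"
    using borel_integrable_atLeastAtMost'[OF cont] unfolding set_integrable_def .
  have int2: "integrable lborel (\<lambda>t. indicator {tp} t *\<^sub>R (c / (A - B * tp)\<^sup>2))"
    by (intro integrable_scaleR_left integrable_real_indicator) auto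
  have zero: "(LINT t|lborel. indicator {tp} t *\<^sub>R (c / (A - B * tp)\<^sup>2)) = 0"
    by (rule integral_eq_zero_AE) (use AE_lborel_singleton[of tp] in \<open>auto elim!: eventually_mono\<close>)
  define G where "G t = c * (t - tm) / ((A - B * tm) * (A - B * t))" for t
  have FTC: "(LINT t|lborel. indicator {tm..tp} t *\<^sub>R (c / (A - B * t)\<^sup>2)) = G tp - G tm"
  proof (rule integral_FTC_atLeastAtMost)
    show "tm \<le> tp" using Dpos by simp
    fix y assume y: "tm \<le> y" "y \<le> tp"
    have p1: "A - B * tm > 0" using pos[of tm] Dpos by simp
    have p2: "A - B * y > 0" using pos[OF y] .
    have nz1: "A - B * tm \<noteq> 0" and nz2: "A - B * y \<noteq> 0" using p1 p2 by auto
    have dG: "((\<lambda>t. c / (A - B * tm) * ((t - tm) / (A - B * t))) has_real_derivative c / (A - B * tm) * ((A - B * tm) / (A - B * y)\<^sup>2)) (at y)"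
      by (intro DERIV_cmult deriv_aux nz2)
    have eG: "G = (\<lambda>t. c / (A - B * tm) * ((t - tm) / (A - B * t)))"
      unfolding G_def[abs_def] by (simp add: field_simps)
    have eV: "c / (A - B * tm) * ((A - B * tm) / (A - B * y)\<^sup>2) = c / (A - B * y)\<^sup>2"
      using nz1 by simp
    have "(G has_real_derivative c / (A - B * y)\<^sup>2) (at y)" using dG unfolding eG eV .
    then show "(G has_vector_derivative c / (A - B * y)\<^sup>2) (at y within {tm..tp})"
      by (simp add: has_real_derivative_iff_has_vector_derivative has_vector_derivative_at_within)
  qed (rule cont)
  have "Ifun b 3 r = (LINT t|lborel. indicator {tm..tp} t *\<^sub>R (student_t_density 3 t * F_cdf (3 + 1) (3 - 1) (Fstat t b 3 r)))"
    unfolding Ifun_def set_lebesgue_integral_def tm_eq tp_eq by simp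
  also have "\<dots> = G tp - G tm"
    unfolding eq using int1 int2 zero FTC by simp
  also have "\<dots> = c * (tp - tm) / ((A - B * tm) * (A - B * tp))"
    unfolding G_def by simp
  also have "\<dots> = 2 / pi * b * s\<^sup>2 * s / ((1 + b\<^sup>2) * (b\<^sup>2 - 2 * r * b + 1))"
  proof -
    have "b\<^sup>2 - 2 * r * b + 1 > 0" using pos[of tp] A_tp Dpos s0 by (simp add: field_simps)
    moreover have gen: "\<And>X Y. X \<noteq> 0 \<Longrightarrow> Y \<noteq> 0 \<Longrightarrow>
        18 / (pi * q) * (q * b / s) / ((3 * X / s\<^sup>2) * (3 * Y / s\<^sup>2)) = 2 / pi * b * s\<^sup>2 * s / (X * Y)"
      using s0 q0 by (simp add: field_simps power2_eq_square)
    moreover have "1 + b\<^sup>2 > 0" by (simp add: add_pos_nonneg)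
    ultimately show ?thesis unfolding A_tm A_tp D c_def
      using gen[of "b\<^sup>2 + 1" "b\<^sup>2 - 2 * r * b + 1"] by (simp add: add.commute)
  qed
  finally show ?thesis unfolding ss s_def[symmetric] .
qed

lemma Q_pos: "-1 < r \<Longrightarrow> r < 1 \<Longrightarrow> b\<^sup>2 - 2 * r * b + 1 > (0::real)"
proof -
  assume "-1 < r" "r < 1"
  then have "r\<^sup>2 < 1" by (simp add: abs_square_less_1)
  have "b\<^sup>2 - 2 * r * b + 1 = (b - r)\<^sup>2 + (1 - r\<^sup>2)" by (simp add: power2_eq_square algebra_simps)
  moreover have "(b - r)\<^sup>2 \<ge> 0" by simp
  ultimately show ?thesis using \<open>r\<^sup>2 < 1\<close> by linarith
qed

lemma Ifun_pair:
  assumes a: "a > 0" and r1: "-1 < \<rho>" and r2: "\<rho> < 1"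
  shows "Ifun a 3 \<rho> + Ifun (1/a) 3 \<rho> = 2 / pi * (1 - \<rho>\<^sup>2) * sqrt (1 - \<rho>\<^sup>2) * a / (a\<^sup>2 - 2 * \<rho> * a + 1)"
proof -
  define k where "k = 2 / pi * (1 - \<rho>\<^sup>2) * sqrt (1 - \<rho>\<^sup>2)"
  have Q: "a\<^sup>2 - 2 * \<rho> * a + 1 > 0" using Q_pos[OF r1 r2] .
  have X: "1 + a\<^sup>2 > 0" by (simp add: add_pos_nonneg)
  have i1: "Ifun a 3 \<rho> = k * (a / ((1 + a\<^sup>2) * (a\<^sup>2 - 2 * \<rho> * a + 1)))"
    unfolding Ifun3[OF a r1 r2] k_def by simp
  have i2: "Ifun (1/a) 3 \<rho> = k * ((1/a) / ((1 + (1/a)\<^sup>2) * ((1/a)\<^sup>2 - 2 * \<rho> * (1/a) + 1)))"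
  proof -
    have "1/a > 0" using a by simp
    from Ifun3[OF this r1 r2] show ?thesis unfolding k_def by simp
  qed
  have e: "(1/a) / ((1 + (1/a)\<^sup>2) * ((1/a)\<^sup>2 - 2 * \<rho> * (1/a) + 1)) = a ^ 3 / ((1 + a\<^sup>2) * (a\<^sup>2 - 2 * \<rho> * a + 1))"
  proof -
    have "(1 + (1/a)\<^sup>2) * ((1/a)\<^sup>2 - 2 * \<rho> * (1/a) + 1) = (1 + a\<^sup>2) * (a\<^sup>2 - 2 * \<rho> * a + 1) / a ^ 4"
      using a by (simp add: field_simps power2_eq_square power4_eq_xxxx)
    then show ?thesis using a Q X by (simp add: field_simps power2_eq_square power3_eq_cube power4_eq_xxxx)
  qed
  have "a / ((1 + a\<^sup>2) * (a\<^sup>2 - 2 * \<rho> * a + 1)) + a ^ 3 / ((1 + a\<^sup>2) * (a\<^sup>2 - 2 * \<rho> * a + 1))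
      = a / (a\<^sup>2 - 2 * \<rho> * a + 1)"
  proof -
    have "a / ((1 + a\<^sup>2) * (a\<^sup>2 - 2 * \<rho> * a + 1)) + a ^ 3 / ((1 + a\<^sup>2) * (a\<^sup>2 - 2 * \<rho> * a + 1))
       = (a * (1 + a\<^sup>2)) / ((1 + a\<^sup>2) * (a\<^sup>2 - 2 * \<rho> * a + 1))"
      by (simp add: add_divide_distrib[symmetric] power2_eq_square power3_eq_cube algebra_simps)
    also have "\<dots> = a / (a\<^sup>2 - 2 * \<rho> * a + 1)" using X by simp
    finally show ?thesis .
  qed
  then have S: "k * (a / ((1 + a\<^sup>2) * (a\<^sup>2 - 2 * \<rho> * a + 1))) + k * (a ^ 3 / ((1 + a\<^sup>2) * (a\<^sup>2 - 2 * \<rho> * a + 1)))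
      = k * (a / (a\<^sup>2 - 2 * \<rho> * a + 1))" by (simp only: distrib_left[symmetric])
  have "Ifun a 3 \<rho> + Ifun (1/a) 3 \<rho> = k * (a / (a\<^sup>2 - 2 * \<rho> * a + 1))" unfolding i1 i2 e S ..
  then show ?thesis unfolding k_def by simp
qed

lemma Jfun3:
  assumes r1: "-1 < r" and r2: "r < 1"
  shows "Jfun b 3 r 1 = 2 / pi * (1 - r\<^sup>2) * sqrt (1 - r\<^sup>2) * \<bar>b\<bar> / (b\<^sup>2 - 2 * r * b + 1)"
proof (cases "b = 0")
  case True
  have "Ifun 0 3 0 = 0" unfolding Ifun_def t_minus_def t_plus_def set_lebesgue_integral_def
    by (rule integral_eq_zero_AE) (use AE_lborel_singleton[of 0] in \<open>auto elim!: eventually_mono\<close>)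
  then show ?thesis unfolding Jfun_def True by simp
next
  case False
  define \<rho> where "\<rho> = r * sgn b"
  have a: "\<bar>b\<bar> > 0" using False by simp
  have rho1: "-1 < \<rho>" "\<rho> < 1" unfolding \<rho>_def using r1 r2 False by (auto simp: sgn_if)
  have rho2: "\<rho>\<^sup>2 = r\<^sup>2" unfolding \<rho>_def using False by (simp add: sgn_if)
  have rho3: "\<rho> * \<bar>b\<bar> = r * b" unfolding \<rho>_def using False by (simp add: sgn_if)
  have "Jfun b 3 r 1 = Ifun \<bar>b\<bar> 3 \<rho> + Ifun (1/\<bar>b\<bar>) 3 \<rho>" unfolding Jfun_def \<rho>_def by simp
  also have "\<dots> = 2 / pi * (1 - \<rho>\<^sup>2) * sqrt (1 - \<rho>\<^sup>2) * \<bar>b\<bar> / (\<bar>b\<bar>\<^sup>2 - 2 * \<rho> * \<bar>b\<bar> + 1)"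
    by (rule Ifun_pair[OF a rho1])
  also have "\<dots> = 2 / pi * (1 - r\<^sup>2) * sqrt (1 - r\<^sup>2) * \<bar>b\<bar> / (b\<^sup>2 - 2 * r * b + 1)"
    unfolding rho2 using rho3 by (simp add: mult.assoc)
  finally show ?thesis .
qed

lemma LINT_abs_split:
  fixes g G :: "real \<Rightarrow> real"
  assumes G: "\<And>x. (G has_real_derivative g x) (at x)"
    and gc: "\<And>x. isCont g x"
    and gpos: "\<And>x. x > 0 \<Longrightarrow> g x \<ge> 0"
    and gneg: "\<And>x. x < 0 \<Longrightarrow> g x \<le> 0"
    and g0: "g 0 = 0"
    and Gp: "(G \<longlongrightarrow> Gp) at_top"
    and Gm: "(G \<longlongrightarrow> Gm) at_bot"
  shows "(LINT x|lborel. \<bar>g x\<bar>) = Gp + Gm - 2 * G 0"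
proof -
  have Gc: "isCont G x" for x using G by (rule DERIV_isCont)
  have G0r: "(G \<longlongrightarrow> G 0) (at_right 0)" and G0l: "(G \<longlongrightarrow> G 0) (at_left 0)"
    using Gc[of 0] by (auto simp: isCont_def filterlim_at_split)
  have gac: "isCont (\<lambda>x. \<bar>g x\<bar>) x" for x using gc[of x] by (intro continuous_intros)
  have R: "set_integrable lborel (einterval 0 \<infinity>) (\<lambda>x. \<bar>g x\<bar>)"
          "(LBINT x=0..\<infinity>. \<bar>g x\<bar>) = Gp - G 0"
  proof -
    have d: "\<And>x. 0 < ereal x \<Longrightarrow> ereal x < \<infinity> \<Longrightarrow> (G has_real_derivative \<bar>g x\<bar>) (at x)"
    proof -
      fix x assume "0 < ereal x"
      then have "x > 0" by (simp add: zero_ereal_def)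
      then show "(G has_real_derivative \<bar>g x\<bar>) (at x)" using G[of x] gpos[of x] by simp
    qed
    show "set_integrable lborel (einterval 0 \<infinity>) (\<lambda>x. \<bar>g x\<bar>)"
      by (rule interval_integral_FTC_nonneg[where F = G and A = "G 0" and B = Gp, OF _ d gac])
         (auto simp: zero_ereal_def ereal_tendsto_simps G0r Gp)
    show "(LBINT x=0..\<infinity>. \<bar>g x\<bar>) = Gp - G 0"
      by (rule interval_integral_FTC_nonneg[where F = G and A = "G 0" and B = Gp, OF _ d gac])
         (auto simp: zero_ereal_def ereal_tendsto_simps G0r Gp)
  qed
  have L: "set_integrable lborel (einterval (-\<infinity>) 0) (\<lambda>x. \<bar>g x\<bar>)"
          "(LBINT x=-\<infinity>..0. \<bar>g x\<bar>) = (- G 0) - (- Gm)"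
  proof -
    have d: "\<And>x. -\<infinity> < ereal x \<Longrightarrow> ereal x < 0 \<Longrightarrow> ((\<lambda>x. - G x) has_real_derivative \<bar>g x\<bar>) (at x)"
    proof -
      fix x assume "ereal x < 0"
      then have "x < 0" by (simp add: zero_ereal_def)
      then show "((\<lambda>x. - G x) has_real_derivative \<bar>g x\<bar>) (at x)"
        using DERIV_minus[OF G[of x]] gneg[of x] by simp
    qed
    have lm: "((\<lambda>x. - G x) \<longlongrightarrow> - Gm) at_bot" using Gm by (rule tendsto_minus)
    have l0: "((\<lambda>x. - G x) \<longlongrightarrow> - G 0) (at_left 0)" using G0l by (rule tendsto_minus)
    show "set_integrable lborel (einterval (-\<infinity>) 0) (\<lambda>x. \<bar>g x\<bar>)"
      by (rule interval_integral_FTC_nonneg[where F = "\<lambda>x. - G x" and A = "- Gm" and B = "- G 0", OF _ d gac])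
         (auto simp: zero_ereal_def ereal_tendsto_simps lm l0)
    show "(LBINT x=-\<infinity>..0. \<bar>g x\<bar>) = (- G 0) - (- Gm)"
      by (rule interval_integral_FTC_nonneg[where F = "\<lambda>x. - G x" and A = "- Gm" and B = "- G 0", OF _ d gac])
         (auto simp: zero_ereal_def ereal_tendsto_simps lm l0)
  qed
  have e1: "einterval 0 \<infinity> = {0<..}" by (simp add: zero_ereal_def)
  have e2: "einterval (-\<infinity>) 0 = {..<0}" by (simp add: zero_ereal_def)
  have I1: "integrable lborel (\<lambda>x. indicator {0<..} x *\<^sub>R \<bar>g x\<bar>)"
    using R(1) unfolding e1 set_integrable_def .
  have I2: "integrable lborel (\<lambda>x. indicator {..<0} x *\<^sub>R \<bar>g x\<bar>)"
    using L(1) unfolding e2 set_integrable_def .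
  have V1: "(LINT x|lborel. indicator {0<..} x *\<^sub>R \<bar>g x\<bar>) = Gp - G 0"
    using R(2) unfolding interval_lebesgue_integral_def e1 set_lebesgue_integral_def by simp
  have V2: "(LINT x|lborel. indicator {..<0} x *\<^sub>R \<bar>g x\<bar>) = Gm - G 0"
    using L(2) unfolding interval_lebesgue_integral_def e2 set_lebesgue_integral_def
    by (simp add: zero_ereal_def)
  have pw: "\<bar>g x\<bar> = indicator {0<..} x *\<^sub>R \<bar>g x\<bar> + indicator {..<0} x *\<^sub>R \<bar>g x\<bar>" for x
    using g0 by (cases x "0::real" rule: linorder_cases) (auto simp: indicator_def)
  have "(LINT x|lborel. \<bar>g x\<bar>) = (LINT x|lborel. indicator {0<..} x *\<^sub>R \<bar>g x\<bar> + indicator {..<0} x *\<^sub>R \<bar>g x\<bar>)"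
    by (subst pw) rule
  also have "\<dots> = Gp - G 0 + (Gm - G 0)" using I1 I2 V1 V2 by simp
  finally show ?thesis by simp
qed

lemma norm_integral:
  assumes r1: "-1 < r" and r2: "r < 1"
  shows "(LINT x|lborel. \<bar>x\<bar> / ((1 + x\<^sup>2) * (x\<^sup>2 - 2 * r * x + 1)))
         = (if r = 0 then 1 else arcsin r / (r * sqrt (1 - r\<^sup>2)))"
proof -
  define Q where "Q x = x\<^sup>2 - 2 * r * x + 1" for x
  define g where "g x = x / ((1 + x\<^sup>2) * Q x)" for x
  have Qp: "Q x > 0" for x unfolding Q_def by (rule Q_pos[OF r1 r2])
  have Xp: "1 + x\<^sup>2 > 0" for x::real by (simp add: add_pos_nonneg)
  have eqf: "(\<lambda>x. \<bar>x\<bar> / ((1 + x\<^sup>2) * (x\<^sup>2 - 2 * r * x + 1))) = (\<lambda>x. \<bar>g x\<bar>)"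
  proof
    fix x
    have "0 < (1 + x\<^sup>2) * Q x" using Qp[of x] Xp[of x] by simp
    then show "\<bar>x\<bar> / ((1 + x\<^sup>2) * (x\<^sup>2 - 2 * r * x + 1)) = \<bar>g x\<bar>"
      unfolding g_def Q_def[symmetric] by (simp add: abs_divide)
  qed
  have gc: "isCont g x" for x
    unfolding g_def Q_def using Qp[of x] Xp[of x] unfolding Q_def
    by (intro continuous_intros) simp
  have gpos: "g x \<ge> 0" if "x > 0" for x unfolding g_def using that Qp[of x] Xp[of x] by simp
  have gneg: "g x \<le> 0" if "x < 0" for x unfolding g_def using that Qp[of x] Xp[of x]
    by (simp add: divide_nonpos_pos)
  have g0: "g 0 = 0" unfolding g_def by simp
  show ?thesis
  proof (cases "r = 0")
    case True
    define G where "G x = - 1 / (2 * (1 + x\<^sup>2))" for x :: real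
    have dG: "(G has_real_derivative g x) (at x)" for x
    proof -
      have "(G has_real_derivative - (- 1 * (0 + 2 * x ^ 1 * 1) * 2) / (2 * (1 + x\<^sup>2) * (2 * (1 + x\<^sup>2)))) (at x)"
        unfolding G_def[abs_def] using Xp[of x]
        by (intro derivative_eq_intros DERIV_divide) (auto simp: power2_eq_square)
      moreover have "- (- 1 * (0 + 2 * x ^ 1 * 1) * 2) / (2 * (1 + x\<^sup>2) * (2 * (1 + x\<^sup>2))) = g x"
      proof -
        have gen: "\<And>X. X \<noteq> 0 \<Longrightarrow> - (- 1 * (0 + 2 * x ^ 1 * 1) * 2) / (2 * X * (2 * X)) = x / (X * X)"
          by (simp add: field_simps)
        have "Q x = 1 + x\<^sup>2" unfolding Q_def True by simp
        then show ?thesis unfolding g_def using gen[of "1 + x\<^sup>2"] Xp[of x] by simp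
      qed
      ultimately show ?thesis by simp
    qed
    have Gp: "(G \<longlongrightarrow> 0) at_top" unfolding G_def[abs_def] by real_asymp
    have Gm: "(G \<longlongrightarrow> 0) at_bot" unfolding G_def[abs_def] by real_asymp
    have "(LINT x|lborel. \<bar>g x\<bar>) = 0 + 0 - 2 * G 0" by (rule LINT_abs_split[OF dG gc gpos gneg g0 Gp Gm])
    then show ?thesis unfolding eqf using True by (simp add: G_def)
  next
    case False
    define s where "s = sqrt (1 - r\<^sup>2)"
    have r2': "r\<^sup>2 < 1" using r1 r2 by (simp add: abs_square_less_1)
    have s0: "s > 0" unfolding s_def using r2' by simp
    have ss: "s\<^sup>2 = 1 - r\<^sup>2" unfolding s_def using r2' by simp
    define G where "G x = 1 / (2 * r) * (arctan ((x - r) / s) / s - arctan x)" for x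
    have dG: "(G has_real_derivative g x) (at x)" for x
    proof -
      have d0: "((\<lambda>x. (x - r) / s) has_real_derivative 1 / s) (at x)"
        using s0 by (auto intro!: derivative_eq_intros)
      have d1: "((\<lambda>x. arctan ((x - r) / s)) has_real_derivative inverse (1 + ((x - r) / s)\<^sup>2) * (1 / s)) (at x)"
        by (rule DERIV_chain2[OF DERIV_arctan d0])
      have e1: "1 + ((x - r) / s)\<^sup>2 = Q x / s\<^sup>2"
        unfolding Q_def using s0 ss by (simp add: field_simps power2_eq_square; algebra)
      have e2: "inverse (1 + ((x - r) / s)\<^sup>2) * (1 / s) = s / Q x"
        unfolding e1 using s0 Qp[of x] by (simp add: field_simps power2_eq_square)
      have "(G has_real_derivative 1 / (2 * r) * (s / Q x / s - inverse (1 + x\<^sup>2))) (at x)"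
        unfolding G_def[abs_def]
        by (intro DERIV_cmult DERIV_diff DERIV_cdivide DERIV_arctan d1[unfolded e2])
      moreover have "1 / (2 * r) * (s / Q x / s - inverse (1 + x\<^sup>2)) = g x"
      proof -
        have "s / Q x / s - inverse (1 + x\<^sup>2) = (1 + x\<^sup>2 - Q x) / (Q x * (1 + x\<^sup>2))"
          using s0 Qp[of x] Xp[of x] by (simp add: field_simps)
        also have "1 + x\<^sup>2 - Q x = 2 * r * x" unfolding Q_def by simp
        finally show ?thesis unfolding g_def using False by (simp add: field_simps)
      qed
      ultimately show ?thesis by simp
    qed
    have Gp: "(G \<longlongrightarrow> 1 / (2 * r) * ((pi/2) / s - pi/2)) at_top"
    proof -
      have "((\<lambda>x. arctan ((x - r)/s)) \<longlongrightarrow> pi/2) at_top" using s0 by real_asymp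
      then show ?thesis unfolding G_def[abs_def]
        using s0 by (intro tendsto_intros tendsto_arctan_at_top) auto
    qed
    have Gm: "(G \<longlongrightarrow> 1 / (2 * r) * ((- (pi/2)) / s - (- (pi/2)))) at_bot"
    proof -
      have "((\<lambda>x. arctan ((x - r)/s)) \<longlongrightarrow> - (pi/2)) at_bot" using s0 by real_asymp
      then show ?thesis unfolding G_def[abs_def]
        using s0 by (intro tendsto_intros tendsto_arctan_at_bot) auto
    qed
    have G0: "G 0 = - (1 / (2 * r)) * (arctan (r / s) / s)"
      unfolding G_def by (simp add: arctan_minus)
    have as: "arctan (r / s) = arcsin r" unfolding s_def using arcsin_arctan[OF r1 r2] by simp
    have "(LINT x|lborel. \<bar>g x\<bar>) = 1 / (2 * r) * ((pi/2) / s - pi/2) + 1 / (2 * r) * ((- (pi/2)) / s - (- (pi/2))) - 2 * G 0"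
      by (rule LINT_abs_split[OF dG gc gpos gneg g0 Gp Gm])
    then show ?thesis unfolding eqf G0 as
      using False s0 by (simp add: field_simps s_def)
  qed
qed

definition hc :: "nat \<Rightarrow> real" where
  "hc n = pochhammer 1 n * pochhammer 1 n / (pochhammer (3/2) n * fact n)"

lemma hc_alt: "hc n = fact n / pochhammer (3/2) n"
  unfolding hc_def pochhammer_fact[symmetric] by simp

lemma hc_0: "hc 0 = 1" unfolding hc_alt by simp

lemma hc_Suc: "hc (Suc n) = hc n * (real n + 1) / (real n + 3/2)"
proof -
  have p: "pochhammer (3/2::real) n > 0" by (rule pochhammer_pos) simp
  show ?thesis unfolding hc_alt pochhammer_Suc fact_Suc using p
    by (simp add: field_simps)
qed

lemma hc_rec: "(2 * real n + 3) * hc (Suc n) = (2 * real n + 2) * hc n"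
  unfolding hc_Suc by (simp add: field_simps)

lemma hc_bounds: "0 < hc n \<and> hc n \<le> 1"
proof (induction n)
  case 0 then show ?case by (simp add: hc_0)
next
  case (Suc n)
  have f: "(real n + 1) / (real n + 3/2) \<le> 1" "0 < (real n + 1) / (real n + 3/2)" by simp_all
  have "hc (Suc n) = hc n * ((real n + 1) / (real n + 3/2))" unfolding hc_Suc by simp
  moreover have "hc n * ((real n + 1) / (real n + 3/2)) \<le> 1 * 1"
    using Suc f by (intro mult_mono) auto
  ultimately show ?case using Suc f by simp
qed

lemma hc_summable: "norm (z::real) < 1 \<Longrightarrow> summable (\<lambda>n. hc n * z ^ n)"
proof -
  assume z: "norm z < 1"
  show ?thesis
  proof (rule summable_comparison_test')
    show "summable (\<lambda>n. \<bar>z\<bar> ^ n)" using z by (simp add: summable_geometric)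
    fix n :: nat
    show "norm (hc n * z ^ n) \<le> \<bar>z\<bar> ^ n"
      using hc_bounds[of n] by (simp add: abs_mult power_abs mult_left_le_one_le)
  qed
qed

definition HG :: "real \<Rightarrow> real" where "HG z = (\<Sum>n. hc n * z ^ n)"
definition HG' :: "real \<Rightarrow> real" where "HG' z = (\<Sum>n. diffs hc n * z ^ n)"

lemma HG_deriv: "norm z < 1 \<Longrightarrow> (HG has_real_derivative HG' z) (at z)"
  unfolding HG_def[abs_def] HG'_def
  by (rule termdiffs_strong'[where K = 1]) (auto intro: hc_summable)

lemma HG_ode:
  assumes z: "norm (z::real) < 1"
  shows "(1 - 2 * z) * HG z + 2 * z * (1 - z) * HG' z = 1"
proof -
  have s0: "summable (\<lambda>n. hc n * z ^ n)" using hc_summable[OF z] .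
  have sD: "summable (\<lambda>n. diffs hc n * z ^ n)"
    by (rule termdiff_converges[where K = 1]) (use z hc_summable in auto)
  have T: "HG z = hc 0 + (\<Sum>n. hc (Suc n) * z ^ n) * z" "summable (\<lambda>n. hc (Suc n) * z ^ n)"
    unfolding HG_def using powser_split_head[OF s0] by auto
  define f where "f n = real n * hc n" for n
  have fS: "f (Suc n) = diffs hc n" for n unfolding f_def diffs_def by simp
  have sf: "summable (\<lambda>n. f n * z ^ n)"
    using sD unfolding fS[symmetric] by (subst (asm) summable_powser_split_head)
  have N: "(\<Sum>n. f n * z ^ n) = f 0 + (\<Sum>n. f (Suc n) * z ^ n) * z"
    using powser_split_head(1)[OF sf] .
  have N': "(\<Sum>n. f n * z ^ n) = HG' z * z" unfolding N HG'_def fS by (simp add: f_def)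
  have "(\<lambda>n. hc (Suc n) * z ^ n - 2 * (hc n * z ^ n) + 2 * (diffs hc n * z ^ n) - 2 * (f n * z ^ n))
        sums ((\<Sum>n. hc (Suc n) * z ^ n) - 2 * HG z + 2 * HG' z - 2 * (\<Sum>n. f n * z ^ n))"
    unfolding HG_def HG'_def
    by (intro sums_diff sums_add sums_mult summable_sums T(2) s0 sD sf)
  moreover have "hc (Suc n) * z ^ n - 2 * (hc n * z ^ n) + 2 * (diffs hc n * z ^ n) - 2 * (f n * z ^ n) = 0" for n
  proof -
    have "hc (Suc n) - 2 * hc n + 2 * diffs hc n - 2 * f n = (2 * real n + 3) * hc (Suc n) - (2 * real n + 2) * hc n"
      unfolding f_def diffs_def by (simp add: algebra_simps)
    also have "\<dots> = 0" using hc_rec[of n] by simp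
    finally have E: "hc (Suc n) - 2 * hc n + 2 * diffs hc n - 2 * f n = 0" .
    have "hc (Suc n) * z ^ n - 2 * (hc n * z ^ n) + 2 * (diffs hc n * z ^ n) - 2 * (f n * z ^ n)
        = (hc (Suc n) - 2 * hc n + 2 * diffs hc n - 2 * f n) * z ^ n" by (simp add: algebra_simps)
    then show ?thesis unfolding E by simp
  qed
  ultimately have "(\<Sum>n. hc (Suc n) * z ^ n) - 2 * HG z + 2 * HG' z - 2 * (\<Sum>n. f n * z ^ n) = 0"
    by (simp add: sums_iff)
  then have "(\<Sum>n. hc (Suc n) * z ^ n) = 2 * HG z - 2 * HG' z + 2 * HG' z * z" unfolding N' by simp
  then have h: "HG z = 1 + z * (2 * HG z - 2 * HG' z + 2 * HG' z * z)" using T(1) hc_0 by simp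
  then show ?thesis by algebra
qed

lemma HG_arcsin:
  assumes x1: "-1 < x" and x2: "x < 1"
  shows "x * sqrt (1 - x\<^sup>2) * HG (x\<^sup>2) = arcsin x"
proof -
  define h where "h x = x * sqrt (1 - x\<^sup>2) * HG (x\<^sup>2) - arcsin x" for x
  have dh: "(h has_real_derivative 0) (at y)" if y: "y \<in> ball 0 1" for y
  proof -
    have y1: "-1 < y" "y < 1" using y by (auto simp: dist_real_def)
    have yy: "y\<^sup>2 < 1" using y1 by (simp add: abs_square_less_1)
    define w where "w = sqrt (1 - y\<^sup>2)"
    have w0: "w > 0" unfolding w_def using yy by simp
    have ww: "w\<^sup>2 = 1 - y\<^sup>2" unfolding w_def using yy by simp
    have di: "((\<lambda>x. 1 - x\<^sup>2) has_real_derivative - (2 * y)) (at y)"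
      by (auto intro!: derivative_eq_intros)
    have dw: "((\<lambda>x. sqrt (1 - x\<^sup>2)) has_real_derivative inverse (sqrt (1 - y\<^sup>2)) / 2 * - (2 * y)) (at y)"
      by (rule DERIV_chain2[OF DERIV_real_sqrt di]) (use yy in simp)
    have dq: "((\<lambda>x. x\<^sup>2) has_real_derivative 2 * y) (at y)"
      by (auto intro!: derivative_eq_intros)
    have nz: "norm (y\<^sup>2) < 1" using yy by simp
    have dG: "((\<lambda>x. HG (x\<^sup>2)) has_real_derivative HG' (y\<^sup>2) * (2 * y)) (at y)"
      by (rule DERIV_chain2[OF HG_deriv[OF nz] dq])
    have dx: "((\<lambda>x. x) has_real_derivative 1) (at y)" by (rule DERIV_ident)
    have d1: "((\<lambda>x. x * sqrt (1 - x\<^sup>2)) has_real_derivative y * (inverse (sqrt (1 - y\<^sup>2)) / 2 * - (2 * y)) + 1 * sqrt (1 - y\<^sup>2)) (at y)"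
      by (rule DERIV_mult'[OF dx dw])
    have d2: "((\<lambda>x. x * sqrt (1 - x\<^sup>2) * HG (x\<^sup>2)) has_real_derivative
        (y * sqrt (1 - y\<^sup>2)) * (HG' (y\<^sup>2) * (2 * y)) +
        (y * (inverse (sqrt (1 - y\<^sup>2)) / 2 * - (2 * y)) + 1 * sqrt (1 - y\<^sup>2)) * HG (y\<^sup>2)) (at y)"
      by (rule DERIV_mult'[OF d1 dG])
    have d3: "(h has_real_derivative
        (y * sqrt (1 - y\<^sup>2)) * (HG' (y\<^sup>2) * (2 * y)) +
        (y * (inverse (sqrt (1 - y\<^sup>2)) / 2 * - (2 * y)) + 1 * sqrt (1 - y\<^sup>2)) * HG (y\<^sup>2) - inverse (sqrt (1 - y\<^sup>2))) (at y)"
      unfolding h_def[abs_def] by (rule DERIV_diff[OF d2 DERIV_arcsin[OF y1]])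
    have ode: "(1 - 2 * y\<^sup>2) * HG (y\<^sup>2) + 2 * y\<^sup>2 * (1 - y\<^sup>2) * HG' (y\<^sup>2) = 1"
      by (rule HG_ode[OF nz])
    have "(y * w) * (HG' (y\<^sup>2) * (2 * y)) + (y * (inverse w / 2 * - (2 * y)) + 1 * w) * HG (y\<^sup>2) - inverse w
        = ((1 - 2 * y\<^sup>2) * HG (y\<^sup>2) + 2 * y\<^sup>2 * (1 - y\<^sup>2) * HG' (y\<^sup>2) - 1) / w"
      using w0 ww by (simp add: field_simps power2_eq_square; algebra)
    also have "\<dots> = 0" unfolding ode by simp
    finally show ?thesis using d3 unfolding w_def by simp
  qed
  have "\<exists>c. \<forall>x\<in>ball 0 1. h x = c"
  proof (rule has_field_derivative_zero_constant)
    fix x :: real assume "x \<in> ball 0 1"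
    then show "(h has_real_derivative 0) (at x within ball 0 1)"
      using dh has_field_derivative_at_within by blast
  qed simp
  then obtain c where c: "\<And>x. x \<in> ball 0 1 \<Longrightarrow> h x = c" by blast
  have "h 0 = 0" unfolding h_def by simp
  then have "c = 0" using c[of 0] by simp
  moreover have "x \<in> ball 0 1" using x1 x2 by (auto simp: dist_real_def)
  ultimately have "h x = 0" using c by simp
  then show ?thesis unfolding h_def by simp
qed

lemma hyp_value:
  assumes r1: "-1 < r" and r2: "r < 1"
  shows "hyp2F1 1 1 (3/2) (r\<^sup>2) = HG (r\<^sup>2)"
  unfolding hyp2F1_def HG_def hc_def by simp

lemma HG_pos: "0 \<le> z \<Longrightarrow> z < 1 \<Longrightarrow> HG z > 0"
proof -
  assume z: "0 \<le> z" "z < 1"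
  have s: "summable (\<lambda>n. hc n * z ^ n)" using z by (intro hc_summable) simp
  have "hc 0 * z ^ 0 \<le> HG z"
  proof -
    have "\<And>n. 0 \<le> hc n * z ^ n" using hc_bounds z by (simp add: less_imp_le)
    then show ?thesis unfolding HG_def using s by (intro sum_le_suminf[of _ "{0}", simplified]) auto
  qed
  then show ?thesis using hc_0 by simp
qed

theorem mainTheorem7:
  fixes r :: real
  assumes "-1 < r" and "r < 1"
  shows "Kconst r = 1 / hyp2F1 1 1 (3/2) (r\<^sup>2)
    \<and> (\<forall>b::real. b \<noteq> 0 \<longrightarrow>
         posterior_cauchy 3 r b = Kconst r * (1 / (1 + b\<^sup>2)) * (\<bar>b\<bar> / (b\<^sup>2 - 2 * r * b + 1)))"
proof -
  note r1 = assms(1) and r2 = assms(2)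
  have r2': "r\<^sup>2 < 1" using r1 r2 by (simp add: abs_square_less_1)
  define s where "s = sqrt (1 - r\<^sup>2)"
  have s0: "s > 0" unfolding s_def using r2' by simp
  define N where "N = (if r = 0 then 1 else arcsin r / (r * s))"
  have KN: "Kconst r = 1 / N"
    unfolding Kconst_def N_def s_def by simp
  have NH: "N = HG (r\<^sup>2)"
  proof (cases "r = 0")
    case True
    have "HG 0 = 1" unfolding HG_def using hc_0 by (simp add: powser_zero)
    then show ?thesis unfolding N_def using True by simp
  next
    case False
    have "r * s * HG (r\<^sup>2) = arcsin r" using HG_arcsin[OF r1 r2] unfolding s_def by simp
    then show ?thesis unfolding N_def using False s0 by (simp add: field_simps)
  qed
  have part1: "Kconst r = 1 / hyp2F1 1 1 (3/2) (r\<^sup>2)"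
    unfolding KN NH hyp_value[OF r1 r2] ..
  define k where "k = 2 / pi * (1 - r\<^sup>2) * sqrt (1 - r\<^sup>2)"
  have k0: "k > 0" unfolding k_def using r2' by (simp add: mult_pos_pos)
  define f where "f x = \<bar>x\<bar> / ((1 + x\<^sup>2) * (x\<^sup>2 - 2 * r * x + 1))" for x
  have cj: "cauchy_density x * Jfun x 3 r 1 = k / pi * f x" for x
    unfolding cauchy_density_def Jfun3[OF r1 r2] k_def f_def by (simp add: field_simps)
  have Nint: "(LINT x|lborel. f x) = N"
    unfolding f_def N_def s_def using norm_integral[OF r1 r2] by simp
  have Npos: "N > 0" unfolding NH using HG_pos[of "r\<^sup>2"] r2' by simp
  have part2: "posterior_cauchy 3 r b = Kconst r * (1 / (1 + b\<^sup>2)) * (\<bar>b\<bar> / (b\<^sup>2 - 2 * r * b + 1))" for b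
  proof -
    have "posterior_cauchy 3 r b = k / pi * f b / (LINT x|lborel. k / pi * f x)"
      unfolding posterior_cauchy_def cj ..
    also have "(LINT x|lborel. k / pi * f x) = k / pi * N" using Nint by simp
    also have "k / pi * f b / (k / pi * N) = f b / N" using k0 by simp
    finally show ?thesis unfolding KN f_def by (simp add: field_simps)
  qed
  show ?thesis using part1 part2 by blast
qed

end
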